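(* If $C$ is a binary linear constant weight code of dimension at least $2$, then $|\mathrm{PAut}(C)|$ is a multiple of $6$.
   Context: A binary linear constant weight code of weight $w$ is an $\mathbb{F}_2$-subspace of $\mathbb{F}_2^n$ all of whose non-zero vectors have exactly $w$ coordinates equal to $1$. $S_n$ acts on $\mathbb{F}_2^n$ by permuting coordinates, $\sigma(v_1,\dots,v_n)=(v_{\sigma^{-1}(1)},\dots,v_{\sigma^{-1}(n)})$, and $\mathrm{PAut}(C)=\{\sigma\in S_n:\sigma(C)=C\}$. *)

theory Defs
  imports "HOL-Analysis.Analysis" "HOL-Library.Z2"
begin

text \<open>Vectors of F_2^n are modelled as bit ^ 'n, the coordinate set being the
  finite type 'n (with n = CARD('n)).\<close>

definition hweight :: "bit ^ 'n \<Rightarrow> nat" where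
  "hweight v = card {i. v $ i \<noteq> 0}"

definition linear_constant_weight_code :: "(bit ^ 'n) set \<Rightarrow> nat \<Rightarrow> bool" where
  "linear_constant_weight_code C w \<longleftrightarrow>
     vec.subspace C \<and> (\<forall>v\<in>C. v \<noteq> 0 \<longrightarrow> hweight v = w)"

definition perm_act :: "('n \<Rightarrow> 'n) \<Rightarrow> bit ^ 'n \<Rightarrow> bit ^ 'n" where
  "perm_act \<sigma> v = (\<chi> i. v $ (inv \<sigma> i))"

definition PAut :: "(bit ^ 'n) set \<Rightarrow> ('n \<Rightarrow> 'n) set" where
  "PAut C = {\<sigma>. \<sigma> permutes (UNIV :: 'n set) \<and> perm_act \<sigma> ` C = C}"

end

theory Submission
  imports Defs "HOL-Algebra.Multiplicative_Group"
begin

lemma perm_group_prime_dvd: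
  fixes S :: "('a \<Rightarrow> 'a) set"
  assumes idS: "id \<in> S" and bijS: "\<And>f. f \<in> S \<Longrightarrow> bij f"
    and compS: "\<And>f g. f \<in> S \<Longrightarrow> g \<in> S \<Longrightarrow> f \<circ> g \<in> S"
    and invS: "\<And>f. f \<in> S \<Longrightarrow> Hilbert_Choice.inv f \<in> S"
    and sS: "s \<in> S" and sp: "s ^^ p = id" and sne: "s \<noteq> id" and pp: "prime p"
  shows "p dvd card S"
proof -
  define G :: "('a \<Rightarrow> 'a) monoid" where "G = \<lparr>carrier = S, mult = (\<circ>), one = id\<rparr>"
  have grp: "group G"
    unfolding G_def
  proof (rule groupI, simp_all add: idS compS o_assoc)
    fix x assume "x \<in> S"
    then show "\<exists>y\<in>S. y \<circ> x = id"
      using invS bijS by (metis bij_is_inj inv_o_cancel)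
  qed
  interpret group G by (rule grp)
  have pw: "s [^]\<^bsub>G\<^esub> n = s ^^ n" for n
    by (induction n) (simp_all add: G_def funpow_Suc_right del: funpow.simps)
  have sc: "s \<in> carrier G" using sS by (simp add: G_def)
  have "ord s dvd p" using pow_eq_id[OF sc, of p] pw sp by (simp add: G_def)
  moreover have "ord s \<noteq> 1" using ord_eq_1[OF sc] sne by (simp add: G_def)
  ultimately have "ord s = p" using pp prime_nat_iff by blast
  then show ?thesis using ord_dvd_group_order[OF sc] by (simp add: order_def G_def)
qed

lemma bit_add_self [simp]: "(x::bit) + x = 0"
  by (cases x) simp_all

lemma vec_bit_add_self [simp]: "(x::bit^'n) + x = 0"
  by (simp add: vec_eq_iff)

lemma finite_vec_bit: "finite (UNIV :: (bit^'n) set)"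
proof -
  have inj: "inj (\<lambda>v::bit^'n. {i. v$i = 1})"
  proof (rule injI)
    fix u v :: "bit^'n" assume "{i. u$i = 1} = {i. v$i = 1}"
    then have "\<forall>i. (u$i = 1) = (v$i = 1)" by blast
    then show "u = v" unfolding vec_eq_iff
      by (metis bit_not_one_iff)
  qed
  have "(\<lambda>v::bit^'n. {i. v$i = 1}) ` UNIV \<subseteq> Pow UNIV" by blast
  then have "finite ((\<lambda>v::bit^'n. {i. v$i = 1}) ` UNIV)"
    by (rule finite_subset) simp
  then show ?thesis using finite_imageD[OF _ inj] by simp
qed

lemma finite_vec_bit_set: "finite (C :: (bit^'n) set)"
  using finite_subset[OF subset_UNIV finite_vec_bit] .

definition addf :: "(bit^'n) set \<Rightarrow> (bit^'n \<Rightarrow> bit) \<Rightarrow> bool" where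
  "addf C \<phi> \<longleftrightarrow> (\<forall>u\<in>C. \<forall>v\<in>C. \<phi> (u + v) = \<phi> u + \<phi> v)"

definition Zs :: "(bit^'n) set \<Rightarrow> 'n set" where
  "Zs C = {i. \<forall>v\<in>C. v$i = 0}"

lemma half:
  assumes sub: "vec.subspace C" and add: "addf C \<phi>" and u: "u \<in> C" "\<phi> u = 1"
  shows "2 * card {v\<in>C. \<phi> v = 1} = card C"
proof -
  have fin: "finite C" using finite_subset[OF subset_UNIV finite_vec_bit] .
  have addC: "v + u \<in> C" if "v \<in> C" for v using sub that u(1) by (rule vec.subspace_add)
  have phadd: "\<phi> (v + u) = \<phi> v + 1" if "v \<in> C" for v
    using add that u unfolding addf_def by simp
  have uu: "v + u + u = v" for v :: "bit^'a" by (simp add: add.assoc)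
  let ?X0 = "{v\<in>C. \<phi> v = 0}" and ?X1 = "{v\<in>C. \<phi> v = 1}"
  have "bij_betw (\<lambda>v. v + u) ?X0 ?X1"
  proof (rule bij_betwI[where g="\<lambda>v. v + u"])
    show "(\<lambda>v. v + u) \<in> ?X0 \<rightarrow> ?X1"
      using addC phadd by auto
    show "(\<lambda>v. v + u) \<in> ?X1 \<rightarrow> ?X0"
      using addC phadd by auto
    show "\<And>x. x \<in> ?X0 \<Longrightarrow> x + u + u = x" by (rule uu)
    show "\<And>x. x \<in> ?X1 \<Longrightarrow> x + u + u = x" by (rule uu)
  qed
  then have "card ?X0 = card ?X1" by (rule bij_betw_same_card)
  moreover have CX: "?X0 \<union> ?X1 = C" by auto
  moreover have "card (?X0 \<union> ?X1) = card ?X0 + card ?X1"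
    by (rule card_Un_disjoint) (use fin in auto)
  ultimately show ?thesis by simp
qed

lemma card_split:
  assumes "finite A"
  shows "card {x\<in>A. P x} = card {x\<in>A. P x \<and> Q x} + card {x\<in>A. P x \<and> \<not> Q x}"
proof -
  have "{x\<in>A. P x} = {x\<in>A. P x \<and> Q x} \<union> {x\<in>A. P x \<and> \<not> Q x}" by blast
  moreover have "card ({x\<in>A. P x \<and> Q x} \<union> {x\<in>A. P x \<and> \<not> Q x})
      = card {x\<in>A. P x \<and> Q x} + card {x\<in>A. P x \<and> \<not> Q x}"
    by (rule card_Un_disjoint) (use assms in auto)
  ultimately show ?thesis by simp
qed

lemma sum_if_const: "finite A \<Longrightarrow> (\<Sum>i\<in>A. if P i then (k::nat) else 0) = k * card (A \<inter> {i. P i})"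
  by (simp add: sum.If_cases)

lemma bit_sum_one: "((x::bit) + y = 1) \<longleftrightarrow> x \<noteq> y"
  by (cases x; cases y) simp_all

lemma class_card:
  fixes C :: "(bit^'n) set"
  assumes lcw: "linear_constant_weight_code C w" and add: "addf C \<phi>"
    and u: "u \<in> C" "\<phi> u = 1"
  shows "card {i. \<forall>v\<in>C. v$i = \<phi> v} + card (- Zs C) = 2 * w"
proof -
  have sub: "vec.subspace C" and wt: "\<And>v. v \<in> C \<Longrightarrow> v \<noteq> 0 \<Longrightarrow> hweight v = w"
    using lcw unfolding linear_constant_weight_code_def by auto
  have fin: "finite C" by (rule finite_vec_bit_set)
  have C0: "0 \<in> C" using sub by (rule vec.subspace_0)
  have ph0: "\<phi> 0 = 0"
  proof -
    have "\<phi> (0 + 0) = \<phi> 0 + \<phi> 0" using add C0 unfolding addf_def by blast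
    then show ?thesis by simp
  qed
  define cls where "cls = {i. \<forall>v\<in>C. v$i = \<phi> v}"
  define X where "X = {v\<in>C. \<phi> v = 1}"
  define H where "H = card X"
  have finX: "finite X" unfolding X_def using fin by simp
  have H2: "2 * H = card C" unfolding H_def X_def by (rule half[OF sub add u])
  have Hpos: "H > 0" unfolding H_def using finX u by (auto simp: X_def card_gt_0_iff)
  define cnt where "cnt i = card (X \<inter> {v. v$i = 1})" for i
  have S1: "(\<Sum>v\<in>X. hweight v) = w * H"
  proof -
    have "(\<Sum>v\<in>X. hweight v) = (\<Sum>v\<in>X. w)"
    proof (rule sum.cong)
      fix v assume "v \<in> X"
      then have "v \<in> C" "v \<noteq> 0" using ph0 by (auto simp: X_def)
      then show "hweight v = w" by (rule wt)
    qed simp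
    then show ?thesis by (simp add: H_def)
  qed
  have hw: "hweight v = (\<Sum>i\<in>UNIV. if v$i = 1 then 1 else 0)" for v :: "bit^'n"
    unfolding hweight_def by (simp add: sum_if_const)
  have S2: "(\<Sum>v\<in>X. hweight v) = (\<Sum>i\<in>UNIV. cnt i)"
  proof -
    have "(\<Sum>v\<in>X. hweight v) = (\<Sum>v\<in>X. \<Sum>i\<in>UNIV. if v$i = 1 then 1 else 0)"
      by (simp add: hw)
    also have "\<dots> = (\<Sum>i\<in>UNIV. \<Sum>v\<in>X. if v$i = 1 then 1 else 0)"
      by (rule sum.swap)
    also have "\<dots> = (\<Sum>i\<in>UNIV. cnt i)"
      unfolding cnt_def by (simp add: sum_if_const[OF finX])
    finally show ?thesis .
  qed
  have Cls: "cnt i = H" if "i \<in> cls" for i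
  proof -
    have "X \<inter> {v. v$i = 1} = X" using that by (auto simp: cls_def X_def)
    then show ?thesis by (simp add: cnt_def H_def)
  qed
  have Cz: "cnt i = 0" if "i \<in> Zs C" for i
  proof -
    have "X \<inter> {v. v$i = 1} = {}" using that by (auto simp: Zs_def X_def)
    then show ?thesis by (simp add: cnt_def)
  qed
  have Co: "2 * cnt i = H" if i1: "i \<notin> Zs C" and i2: "i \<notin> cls" for i
  proof -
    obtain v0 where v0: "v0 \<in> C" "v0$i = 1" using i1 by (auto simp: Zs_def)
    obtain v1 where v1: "v1 \<in> C" "v1$i \<noteq> \<phi> v1" using i2 by (auto simp: cls_def)
    have addi: "addf C (\<lambda>v. v$i)" by (simp add: addf_def)
    have addc: "addf C (\<lambda>v. \<phi> v + v$i)"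
      unfolding addf_def
    proof (intro ballI)
      fix x y assume xy: "x \<in> C" "y \<in> C"
      then have "\<phi> (x + y) = \<phi> x + \<phi> y" using add unfolding addf_def by blast
      then show "\<phi> (x + y) + (x + y)$i = \<phi> x + x$i + (\<phi> y + y$i)"
        by (simp only: vector_add_component add.assoc add.left_commute)
    qed
    have h1: "2 * card {v\<in>C. v$i = 1} = card C" using half[OF sub addi v0] by simp
    have h2: "2 * card {v\<in>C. \<phi> v + v$i = 1} = card C"
    proof -
      have "\<phi> v1 + v1$i = 1" using v1(2) bit_sum_one by metis
      from half[OF sub addc v1(1) this] show ?thesis .
    qed
    define a where "a = card {v\<in>C. \<phi> v = 1 \<and> v$i = 1}"
    define b where "b = card {v\<in>C. \<phi> v = 1 \<and> \<not> v$i = 1}"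
    define c where "c = card {v\<in>C. v$i = 1 \<and> \<not> \<phi> v = 1}"
    have e1: "H = a + b" unfolding H_def X_def a_def b_def by (rule card_split[OF fin])
    have e2: "card {v\<in>C. v$i = 1} = a + c"
      unfolding a_def c_def by (subst card_split[OF fin, where Q="\<lambda>v. \<phi> v = 1"]) (simp add: conj_commute)
    have e3: "card {v\<in>C. \<phi> v + v$i = 1} = b + c"
    proof -
      have "card {v\<in>C. \<phi> v + v$i = 1} = card {v\<in>C. \<phi> v + v$i = 1 \<and> \<phi> v = 1} + card {v\<in>C. \<phi> v + v$i = 1 \<and> \<not> \<phi> v = 1}"
        by (rule card_split[OF fin])
      moreover have "{v\<in>C. \<phi> v + v$i = 1 \<and> \<phi> v = 1} = {v\<in>C. \<phi> v = 1 \<and> \<not> v$i = 1}"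
        by (auto simp: bit_sum_one)
      moreover have "{v\<in>C. \<phi> v + v$i = 1 \<and> \<not> \<phi> v = 1} = {v\<in>C. v$i = 1 \<and> \<not> \<phi> v = 1}"
        by (auto simp: bit_sum_one)
      ultimately show ?thesis by (simp add: b_def c_def)
    qed
    have "cnt i = a" unfolding cnt_def a_def X_def by (rule arg_cong[where f=card]) auto
    then show ?thesis using e1 e2 e3 h1 h2 H2 by linarith
  qed
  have pt: "2 * cnt i = (if i \<in> cls then H else 0) + (if i \<in> - Zs C then H else 0)" for i
  proof (cases "i \<in> cls")
    case True
    then have "i \<notin> Zs C" using u by (auto simp: cls_def Zs_def)
    then show ?thesis using True Cls by simp
  next
    case False
    then show ?thesis using Cz Co by (cases "i \<in> Zs C") auto
  qed
  have "2 * (w * H) = (\<Sum>i\<in>UNIV. 2 * cnt i)"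
    using S1 S2 by (simp add: sum_distrib_left[symmetric])
  also have "\<dots> = (\<Sum>i\<in>UNIV. if i \<in> cls then H else 0) + (\<Sum>i\<in>UNIV. if i \<in> - Zs C then H else 0)"
    by (simp only: pt sum.distrib)
  also have "\<dots> = H * card cls + H * card (- Zs C)"
    using sum_if_const[of UNIV "\<lambda>i. i \<in> cls" H] sum_if_const[of UNIV "\<lambda>i. i \<in> - Zs C" H]
    by (simp add: Compl_eq)
  finally have "H * (2 * w) = H * (card cls + card (- Zs C))" by (simp add: algebra_simps)
  then show ?thesis using Hpos unfolding cls_def by simp
qed

definition Rf :: "(bit^'n) set \<Rightarrow> (bit^'n \<Rightarrow> bit) \<Rightarrow> bit^'n \<Rightarrow> bit" where
  "Rf C \<phi> = (\<lambda>v. if v \<in> C then \<phi> v else 0)"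

definition kap :: "(bit^'n) set \<Rightarrow> 'n \<Rightarrow> bit^'n \<Rightarrow> bit" where
  "kap C i = Rf C (\<lambda>v. v$i)"

lemma kap_eq: "kap C j = Rf C \<phi> \<longleftrightarrow> (\<forall>v\<in>C. v$j = \<phi> v)"
  unfolding kap_def Rf_def fun_eq_iff by (metis (full_types))

lemma kap_app: "v \<in> C \<Longrightarrow> kap C j v = v $ j"
  by (simp add: kap_def Rf_def)

lemma Rf_app: "v \<in> C \<Longrightarrow> Rf C \<phi> v = \<phi> v"
  by (simp add: Rf_def)

lemma construct_perm:
  fixes C :: "(bit^'n) set" and A B :: "bit^'n \<Rightarrow> bit^'n"
  assumes lcw: "linear_constant_weight_code C w"
    and BC: "\<And>v. v \<in> C \<Longrightarrow> B v \<in> C" and AC: "\<And>v. v \<in> C \<Longrightarrow> A v \<in> C"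
    and Badd: "\<And>u v. u \<in> C \<Longrightarrow> v \<in> C \<Longrightarrow> B (u + v) = B u + B v"
    and AB: "\<And>v. v \<in> C \<Longrightarrow> A (B v) = v" and BA: "\<And>v. v \<in> C \<Longrightarrow> B (A v) = v"
    and Bk: "\<And>v. v \<in> C \<Longrightarrow> (B ^^ k) v = v" and k: "k \<ge> 1"
    and ne: "v0 \<in> C" "B v0 \<noteq> v0"
  shows "\<exists>\<sigma>\<in>PAut C. \<sigma> ^^ k = id \<and> \<sigma> \<noteq> id"
proof -
  define m0 where "m0 = 2 * w - card (- Zs C)"
  have cls_card: "card {j. kap C j = Rf C \<phi>} = m0" if "addf C \<phi>" "u \<in> C" "\<phi> u = 1" for \<phi> u
    using class_card[OF lcw that] unfolding kap_eq m0_def by simp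
  define e where "e \<psi> = (SOME f. bij_betw f {0..<m0} {j. kap C j = \<psi>})" for \<psi>
  have e_bij: "bij_betw (e (Rf C \<phi>)) {0..<m0} {j. kap C j = Rf C \<phi>}"
    if "addf C \<phi>" "u \<in> C" "\<phi> u = 1" for \<phi> u
  proof -
    have "\<exists>f. bij_betw f {0..<m0} {j. kap C j = Rf C \<phi>}"
      using ex_bij_betw_nat_finite[of "{j. kap C j = Rf C \<phi>}"] cls_card[OF that] by simp
    then show ?thesis unfolding e_def by (rule someI_ex)
  qed
  have nzi: "\<exists>u\<in>C. u$i = 1" if "i \<notin> Zs C" for i
    using that by (auto simp: Zs_def)
  have addi: "addf C (\<lambda>v. v$i)" for i by (simp add: addf_def)
  have addBi: "addf C (\<lambda>v. (B v)$i)" for i using Badd by (simp add: addf_def)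
  have nzBi: "\<exists>u\<in>C. (B u)$i = 1" if "i \<notin> Zs C" for i
    using nzi[OF that] AC BA by metis
  define idx where "idx i = inv_into {0..<m0} (e (kap C i)) i" for i
  define \<sigma> where "\<sigma> i = (if i \<in> Zs C then i else e (Rf C (\<lambda>v. (B v)$i)) (idx i))" for i
  have F1: "idx i \<in> {0..<m0} \<and> e (kap C i) (idx i) = i" if iz: "i \<notin> Zs C" for i
  proof -
    obtain u where u: "u \<in> C" "u$i = 1" using nzi[OF iz] by blast
    have bb: "bij_betw (e (kap C i)) {0..<m0} {j. kap C j = kap C i}"
      using e_bij[OF addi u] unfolding kap_def by simp
    have "i \<in> {j. kap C j = kap C i}" by simp
    then show ?thesis unfolding idx_def
      using bij_betw_inv_into_right[OF bb] bb
      by (metis bij_betw_imp_surj_on inv_into_into)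
  qed
  have F2: "kap C (\<sigma> i) = Rf C (\<lambda>v. (B v)$i) \<and> idx (\<sigma> i) = idx i" if iz: "i \<notin> Zs C" for i
  proof -
    obtain u where u: "u \<in> C" "(B u)$i = 1" using nzBi[OF iz] by blast
    have bb: "bij_betw (e (Rf C (\<lambda>v. (B v)$i))) {0..<m0} {j. kap C j = Rf C (\<lambda>v. (B v)$i)}"
      using e_bij[OF addBi u] by simp
    have si: "\<sigma> i = e (Rf C (\<lambda>v. (B v)$i)) (idx i)" using iz by (simp add: \<sigma>_def)
    have "\<sigma> i \<in> {j. kap C j = Rf C (\<lambda>v. (B v)$i)}"
      using si bij_betw_apply[OF bb] F1[OF iz] by simp
    then have k1: "kap C (\<sigma> i) = Rf C (\<lambda>v. (B v)$i)" by simp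
    have "idx (\<sigma> i) = inv_into {0..<m0} (e (kap C (\<sigma> i))) (\<sigma> i)" by (rule idx_def)
    also have "\<dots> = inv_into {0..<m0} (e (Rf C (\<lambda>v. (B v)$i))) (e (Rf C (\<lambda>v. (B v)$i)) (idx i))"
      unfolding k1 by (simp only: si)
    also have "\<dots> = idx i" using bij_betw_inv_into_left[OF bb] F1[OF iz] by simp
    finally show ?thesis using k1 by simp
  qed
  have F3: "\<sigma> i \<notin> Zs C" if iz: "i \<notin> Zs C" for i
  proof
    assume z: "\<sigma> i \<in> Zs C"
    obtain u where u: "u \<in> C" "(B u)$i = 1" using nzBi[OF iz] by blast
    have "kap C (\<sigma> i) u = (B u)$i" using F2[OF iz] u by (simp add: Rf_app)
    moreover have "kap C (\<sigma> i) u = 0" using z u by (simp add: kap_app Zs_def)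
    ultimately show False using u by simp
  qed
  have Fz: "\<sigma> i = i" if "i \<in> Zs C" for i using that by (simp add: \<sigma>_def)
  have iter: "(\<sigma> ^^ n) i \<notin> Zs C \<and> kap C ((\<sigma> ^^ n) i) = Rf C (\<lambda>v. ((B ^^ n) v)$i) \<and> idx ((\<sigma> ^^ n) i) = idx i"
    if "i \<notin> Zs C" for i n
  proof (induction n)
    case 0
    then show ?case using that by (simp add: kap_def)
  next
    case (Suc n)
    define j where "j = (\<sigma> ^^ n) i"
    have j: "j \<notin> Zs C" "kap C j = Rf C (\<lambda>v. ((B ^^ n) v)$i)" "idx j = idx i"
      using Suc unfolding j_def by auto
    have s: "(\<sigma> ^^ Suc n) i = \<sigma> j" by (simp add: j_def)
    have "Rf C (\<lambda>v. (B v)$j) = Rf C (\<lambda>v. ((B ^^ Suc n) v)$i)"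
    proof
      fix v show "Rf C (\<lambda>v. (B v)$j) v = Rf C (\<lambda>v. ((B ^^ Suc n) v)$i) v"
      proof (cases "v \<in> C")
        case True
        have "(B v)$j = kap C j (B v)" using BC[OF True] by (simp add: kap_app)
        also have "\<dots> = ((B ^^ n) (B v))$i" using j(2) BC[OF True] by (simp add: Rf_app)
        also have "\<dots> = ((B ^^ Suc n) v)$i" by (simp add: funpow_Suc_right del: funpow.simps)
        finally show ?thesis using True by (simp add: Rf_app)
      qed (simp add: Rf_def)
    qed
    then show ?case using s F2[OF j(1)] F3[OF j(1)] j(3) by simp
  qed
  have iterz: "(\<sigma> ^^ n) i = i" if "i \<in> Zs C" for i n
    by (induction n) (simp_all add: Fz[OF that])
  have sk: "\<sigma> ^^ k = id"
  proof
    fix i show "(\<sigma> ^^ k) i = id i"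
    proof (cases "i \<in> Zs C")
      case True then show ?thesis by (simp add: iterz)
    next
      case False
      note it = iter[OF False, of k]
      have "Rf C (\<lambda>v. ((B ^^ k) v)$i) = kap C i"
        unfolding kap_def Rf_def using Bk by auto
      then have "kap C ((\<sigma> ^^ k) i) = kap C i" using it by simp
      then have "(\<sigma> ^^ k) i = e (kap C i) (idx i)"
        using F1[of "(\<sigma> ^^ k) i"] it by metis
      then show ?thesis using F1[OF False] by simp
    qed
  qed
  have bs: "bij \<sigma>"
  proof (rule o_bij[where g="\<sigma> ^^ (k - 1)"])
    have kk: "\<sigma> ^^ k = \<sigma> ^^ Suc (k - 1)" using k by simp
    have "\<sigma> ^^ Suc (k - 1) = \<sigma> ^^ (k - 1) \<circ> \<sigma>" by (rule funpow_Suc_right)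
    then show "\<sigma> ^^ (k - 1) \<circ> \<sigma> = id" using sk kk by simp
    have "\<sigma> ^^ Suc (k - 1) = \<sigma> \<circ> \<sigma> ^^ (k - 1)" by (rule funpow.simps(2))
    then show "\<sigma> \<circ> \<sigma> ^^ (k - 1) = id" using sk kk by simp
  qed
  have AV: "(A v) $ (\<sigma> i) = v $ i" if "v \<in> C" for v i
  proof (cases "i \<in> Zs C")
    case True
    then show ?thesis using AC[OF that] that by (simp add: Fz Zs_def)
  next
    case False
    have "(A v) $ (\<sigma> i) = kap C (\<sigma> i) (A v)" using AC[OF that] by (simp add: kap_app)
    also have "\<dots> = (B (A v)) $ i" using F2[OF False] AC[OF that] by (simp add: Rf_app)
    finally show ?thesis using BA[OF that] by simp
  qed
  have PA: "perm_act \<sigma> v = A v" if "v \<in> C" for v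
  proof -
    have "(A v) $ j = v $ (Hilbert_Choice.inv \<sigma> j)" for j
      using AV[OF that, of "Hilbert_Choice.inv \<sigma> j"] surj_f_inv_f[OF bij_is_surj[OF bs]] by simp
    then show ?thesis unfolding perm_act_def vec_eq_iff by simp
  qed
  have "\<sigma> \<in> PAut C"
    unfolding PAut_def
  proof (intro CollectI conjI)
    show "\<sigma> permutes UNIV" using bs by (intro bij_imp_permutes) simp_all
    show "perm_act \<sigma> ` C = C"
    proof
      show "perm_act \<sigma> ` C \<subseteq> C" using PA AC by auto
      show "C \<subseteq> perm_act \<sigma> ` C"
      proof
        fix v assume v: "v \<in> C"
        then have "v = perm_act \<sigma> (B v)" using PA[OF BC[OF v]] AB[OF v] by simp
        then show "v \<in> perm_act \<sigma> ` C" using BC[OF v] by blast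
      qed
    qed
  qed
  moreover have "\<sigma> \<noteq> id"
  proof
    assume sid: "\<sigma> = id"
    obtain i where i: "(B v0) $ i \<noteq> v0 $ i" using ne(2) by (auto simp: vec_eq_iff)
    have iz: "i \<notin> Zs C"
    proof
      assume "i \<in> Zs C"
      then have "v0$i = 0" "(B v0)$i = 0" using ne(1) BC[OF ne(1)] unfolding Zs_def by blast+
      with i show False by simp
    qed
    have "kap C i = Rf C (\<lambda>v. (B v)$i)" using F2[OF iz] sid by simp
    then have "v0 $ i = (B v0) $ i" using ne(1) by (simp add: kap_eq)
    then show False using i by simp
  qed
  ultimately show ?thesis using sk by blast
qed

lemma perm_act_id: "perm_act id v = v"
  by (simp add: perm_act_def)

lemma perm_act_comp: "bij f \<Longrightarrow> bij g \<Longrightarrow> perm_act (f \<circ> g) v = perm_act f (perm_act g v)"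
  by (simp add: perm_act_def o_inv_distrib)

lemma PAut_id: "id \<in> PAut C"
  by (simp add: PAut_def permutes_id perm_act_id)

lemma PAut_bij: "f \<in> PAut C \<Longrightarrow> bij f"
  by (auto simp: PAut_def intro: permutes_bij)

lemma PAut_comp: assumes "f \<in> PAut C" "g \<in> PAut C" shows "f \<circ> g \<in> PAut C"
proof -
  have bf: "bij f" "bij g" using assms PAut_bij by auto
  have "perm_act (f \<circ> g) ` C = perm_act f ` (perm_act g ` C)"
    using perm_act_comp[OF bf] by (simp add: image_image)
  also have "\<dots> = C" using assms by (simp add: PAut_def)
  finally show ?thesis using assms by (simp add: PAut_def permutes_compose)
qed

lemma PAut_inv: assumes "f \<in> PAut C" shows "Hilbert_Choice.inv f \<in> PAut C"
proof -
  have bf: "bij f" using assms PAut_bij by auto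
  have bi: "bij (Hilbert_Choice.inv f)" using bf by (rule bij_imp_bij_inv)
  have c: "perm_act (Hilbert_Choice.inv f) (perm_act f v) = v" for v
    using perm_act_comp[OF bi bf, of v] inv_o_cancel[OF bij_is_inj[OF bf]] by (simp add: perm_act_id)
  have "C = perm_act (Hilbert_Choice.inv f) ` (perm_act f ` C)"
    by (simp add: image_image c)
  also have "\<dots> = perm_act (Hilbert_Choice.inv f) ` C" using assms by (simp add: PAut_def)
  finally show ?thesis using assms by (simp add: PAut_def permutes_inv)
qed

lemma funpow2: "(f ^^ 2) x = f (f x)" by (simp add: numeral_2_eq_2)
lemma funpow3: "(f ^^ 3) x = f (f (f x))" by (simp add: numeral_3_eq_3)

lemma bit_cases3: "P (0::bit) \<Longrightarrow> P 1 \<Longrightarrow> P x" by (cases x) auto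

theorem corollary5p3:
  fixes C :: "(bit ^ 'n) set" and w :: nat
  assumes "linear_constant_weight_code C w"
    and "vec.dim C \<ge> 2"
  shows "6 dvd card (PAut C)"
proof -
  note lcw = assms(1)
  have sub: "vec.subspace C" and wt: "\<And>v. v \<in> C \<Longrightarrow> v \<noteq> 0 \<Longrightarrow> hweight v = w"
    using lcw unfolding linear_constant_weight_code_def by auto
  have addC: "u + v \<in> C" if "u \<in> C" "v \<in> C" for u v using sub that by (rule vec.subspace_add)
  have scC: "c *s v \<in> C" if "v \<in> C" for c v using sub that by (rule vec.subspace_scale)
  have "\<exists>a b. a \<in> C \<and> b \<in> C \<and> a \<noteq> 0 \<and> b \<noteq> 0 \<and> a \<noteq> b"
  proof (rule ccontr)
    assume nab: "\<not> ?thesis"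
    define a0 where "a0 = (SOME a. a \<in> C \<and> a \<noteq> 0)"
    have "C \<subseteq> vec.span {a0}"
    proof
      fix v assume v: "v \<in> C"
      show "v \<in> vec.span {a0}"
      proof (cases "v = 0")
        case True then show ?thesis by (simp add: vec.span_zero)
      next
        case False
        then have "a0 \<in> C \<and> a0 \<noteq> 0" unfolding a0_def using v by (metis (mono_tags, lifting) someI)
        then have "v = a0" using nab v False by blast
        then show ?thesis by (simp add: vec.span_base)
      qed
    qed
    then have "vec.dim C \<le> card {a0}" by (rule vec.dim_le_card) simp
    then show False using assms(2) by simp
  qed
  then obtain a b where ab: "a \<in> C" "b \<in> C" "a \<noteq> 0" "b \<noteq> 0" "a \<noteq> b" by blast
  have abC: "a + b \<in> C" using addC ab by simp
  have abnz: "a + b \<noteq> 0"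
  proof
    assume "a + b = 0"
    then have "a + b + b = b" by simp
    then show False using ab(5) by (simp add: add.assoc)
  qed
  have supp: "card {i. v$i = 1} = w" if "v \<in> C" "v \<noteq> 0" for v
    using wt[OF that] unfolding hweight_def by simp
  have suppne: "{i. v$i = 1} \<noteq> {}" if "v \<noteq> 0" for v :: "bit^'n"
    using that by (auto simp: vec_eq_iff)
  have finn: "finite (S :: 'n set)" for S by simp
  have wpos: "w > 0" using supp[OF ab(1,3)] suppne[OF ab(3)] by (metis card_gt_0_iff finn)
  have Sab: "{i. (a+b)$i = 1} = ({i. a$i = 1} - {i. b$i = 1}) \<union> ({i. b$i = 1} - {i. a$i = 1})"
    by (auto simp: bit_sum_one)
  obtain q where q: "a$q = 1" "b$q = 1"
  proof (rule ccontr)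
    assume "\<not> thesis"
    then have dj: "{i. a$i = 1} \<inter> {i. b$i = 1} = {}" using that by blast
    then have "{i. (a+b)$i = 1} = {i. a$i = 1} \<union> {i. b$i = 1}" using Sab by blast
    then have "card {i. (a+b)$i = 1} = card {i. a$i = 1} + card {i. b$i = 1}"
      using card_Un_disjoint[OF finn finn dj] by simp
    then show False using supp[OF ab(1,3)] supp[OF ab(2,4)] supp[OF abC abnz] wpos by simp
  qed
  obtain p where p: "a$p = 0" "b$p = 1"
  proof (rule ccontr)
    assume "\<not> thesis"
    then have sb: "{i. b$i = 1} \<subseteq> {i. a$i = 1}" using that by fastforce
    then have "{i. (a+b)$i = 1} = {i. a$i = 1} - {i. b$i = 1}" using Sab by blast
    then have "card {i. (a+b)$i = 1} = card {i. a$i = 1} - card {i. b$i = 1}"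
      using card_Diff_subset[OF finn sb] by simp
    then have "card {i. (a+b)$i = 1} = 0" using supp[OF ab(1,3)] supp[OF ab(2,4)] by simp
    then show False using suppne[OF abnz] by (simp add: card_eq_0_iff)
  qed
  define T2 where "T2 v = v + (v$p) *s a" for v
  have T2C: "T2 v \<in> C" if "v \<in> C" for v using that ab by (simp add: T2_def addC scC)
  have T2add: "T2 (u + v) = T2 u + T2 v" for u v
    by (simp only: T2_def vector_add_component vector_sadd_rdistrib add.assoc add.left_commute add.commute)
  have T2T2: "T2 (T2 v) = v" for v
    unfolding vec_eq_iff
  proof
    fix j
    show "T2 (T2 v) $ j = v $ j" using p(1)
      by (cases "v$j"; cases "v$p"; cases "a$j")
        (simp_all add: T2_def)
  qed
  have T2b: "T2 b \<noteq> b"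
  proof
    assume "T2 b = b"
    then have "b + a = b" using p(2) by (simp add: T2_def)
    then have "b + a + b = b + b" by simp
    then show False using ab(3) by (simp add: add.assoc add.left_commute)
  qed
  obtain s2 where s2: "s2 \<in> PAut C" "s2 ^^ 2 = id" "s2 \<noteq> id"
    using construct_perm[OF lcw, of T2 T2 2 b] T2C T2add T2T2 T2b ab(2) by (auto simp: funpow2)
  define T3 where "T3 v = v + (v$p) *s a + (v$q) *s b" for v
  have T3C: "T3 v \<in> C" if "v \<in> C" for v using that ab by (simp add: T3_def addC scC)
  have T3add: "T3 (u + v) = T3 u + T3 v" for u v
    by (simp only: T3_def vector_add_component vector_sadd_rdistrib add.assoc add.left_commute add.commute)
  have T3gen: "T3 v $ j = v$j + v$p * a$j + v$q * b$j" for v j by (simp add: T3_def)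
  have T3p: "T3 v $ p = v$p + v$q" for v using p by (simp add: T3gen)
  have T3q: "T3 v $ q = v$p" for v using q
    by (cases "v$p"; cases "v$q") (simp_all add: T3gen)
  have T3T3T3: "T3 (T3 (T3 v)) = v" for v
    unfolding vec_eq_iff
  proof
    fix j
    show "T3 (T3 (T3 v)) $ j = v $ j"
      unfolding T3gen[of "T3 (T3 v)"] T3gen[of "T3 v"] T3p T3q T3gen[of v]
      by (cases "v$j"; cases "v$p"; cases "v$q";
          cases "a$j"; cases "b$j") simp_all
  qed
  have T3b: "T3 b \<noteq> b"
  proof
    assume "T3 b = b"
    then have "T3 b $ p = b $ p" by simp
    then show False using T3p[of b] p q by simp
  qed
  obtain s3 where s3: "s3 \<in> PAut C" "s3 ^^ 3 = id" "s3 \<noteq> id"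
    using construct_perm[OF lcw, of T3 "\<lambda>v. T3 (T3 v)" 3 b] T3C T3add T3T3T3 T3b ab(2)
    by (auto simp: funpow3)
  have finP: "finite (PAut C)"
    by (rule finite_subset[OF _ finite_permutations[OF finn[of UNIV]]]) (auto simp: PAut_def)
  have "2 dvd card (PAut C)"
    by (rule perm_group_prime_dvd[OF PAut_id PAut_bij PAut_comp PAut_inv s2]) simp_all
  moreover have "3 dvd card (PAut C)"
    by (rule perm_group_prime_dvd[OF PAut_id PAut_bij PAut_comp PAut_inv s3]) simp_all
  ultimately show ?thesis by presburger
qed

end
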